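(* Let $\overline{G}$ be the roommate diversity game described in the context. For every outcome $\pi$ of $\overline{G}$ that is not top-type, there exists a top-type outcome $\pi'$ that is more popular than $\pi$, i.e. $\phi(\pi',\pi)>0$.
   Context: In a roommate diversity game with agent set $N=R\cup B$ ($R$ red, $B$ blue) and room size $s$, an outcome is a partition of $N$ into rooms of size $s$; $\pi(a)$ is the room containing $a$ and $\theta(C)=|C\cap R|/|C|$. Each agent $a$ has a trichotomous preference given by a partition of the fractions into sets $D_a^+$ (approved), $D_a^n$ (neutral), $D_a^-$ (disapproved), possibly empty, with approved $\succ$ neutral $\succ$ disapproved and indifference within each set. Agent $a$ prefers $\pi$ to $\pi'$ if it strictly prefers $\theta(\pi(a))$ to $\theta(\pi'(a))$; $N(\pi,\pi')$ is the set of agents preferring $\pi$ to $\pi'$ and $\phi(\pi,\pi')=|N(\pi,\pi')|-|N(\pi',\pi)|$. The game $\overline{G}$: $R=\{r_1,r_2,r_3\}$, $B=\{b_1,\dots,b_6\}$, $s=3$; $r_1$: $D^+=\{1/3\}$, $D^-=\{2/3,1\}$; $r_2,r_3$: $D^+=\{2/3\}$, $D^-=\{1/3,1\}$; $b_1,\dots,b_4$: $D^+=\{1/3\}$, $D^n=\{2/3\}$, $D^-=\{0\}$; $b_5,b_6$: $D^+=\{0\}$, $D^-=\{1/3,2/3\}$ (a red agent is never in a room of fraction $0$, a blue agent never in one of fraction $1$). An outcome is top-type if it equals $\{\{r_1,\hat b_1,\hat b_2\},\{r_2,r_3,\hat b_3\},\{b_5,b_6,\hat b_4\}\}$ for some enumeration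 $\hat b_1,\dots,\hat b_4$ of $\{b_1,b_2,b_3,b_4\}$. *)

theory Defs
  imports Complex_Main "HOL-Library.Disjoint_Sets"
begin

datatype agent = R1 | R2 | R3 | B1 | B2 | B3 | B4 | B5 | B6

definition Red :: "agent set" where "Red = {R1, R2, R3}"
definition Blue :: "agent set" where "Blue = {B1, B2, B3, B4, B5, B6}"

definition room_size :: nat where "room_size = 3"

definition outcome :: "agent set set \<Rightarrow> bool" where
  "outcome P \<longleftrightarrow> partition_on (UNIV :: agent set) P \<and> (\<forall>C\<in>P. card C = room_size)"

definition room :: "agent set set \<Rightarrow> agent \<Rightarrow> agent set" where
  "room P a = (THE C. C \<in> P \<and> a \<in> C)"

definition theta :: "agent set \<Rightarrow> real" where
  "theta C = real (card (C \<inter> Red)) / real (card C)"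

definition Dplus :: "agent \<Rightarrow> real set" where
  "Dplus a = (case a of
      R1 \<Rightarrow> {1/3} | R2 \<Rightarrow> {2/3} | R3 \<Rightarrow> {2/3}
    | B1 \<Rightarrow> {1/3} | B2 \<Rightarrow> {1/3} | B3 \<Rightarrow> {1/3} | B4 \<Rightarrow> {1/3}
    | B5 \<Rightarrow> {0} | B6 \<Rightarrow> {0})"

definition Dneutral :: "agent \<Rightarrow> real set" where
  "Dneutral a = (case a of
      R1 \<Rightarrow> {} | R2 \<Rightarrow> {} | R3 \<Rightarrow> {}
    | B1 \<Rightarrow> {2/3} | B2 \<Rightarrow> {2/3} | B3 \<Rightarrow> {2/3} | B4 \<Rightarrow> {2/3}
    | B5 \<Rightarrow> {} | B6 \<Rightarrow> {})"

definition Dminus :: "agent \<Rightarrow> real set" where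
  "Dminus a = (case a of
      R1 \<Rightarrow> {2/3, 1} | R2 \<Rightarrow> {1/3, 1} | R3 \<Rightarrow> {1/3, 1}
    | B1 \<Rightarrow> {0} | B2 \<Rightarrow> {0} | B3 \<Rightarrow> {0} | B4 \<Rightarrow> {0}
    | B5 \<Rightarrow> {1/3, 2/3} | B6 \<Rightarrow> {1/3, 2/3})"

definition prefers_frac :: "agent \<Rightarrow> real \<Rightarrow> real \<Rightarrow> bool" where
  "prefers_frac a x y \<longleftrightarrow>
     (x \<in> Dplus a \<and> (y \<in> Dneutral a \<or> y \<in> Dminus a)) \<or> (x \<in> Dneutral a \<and> y \<in> Dminus a)"

definition Nset :: "agent set set \<Rightarrow> agent set set \<Rightarrow> agent set" where
  "Nset P P' = {a. prefers_frac a (theta (room P a)) (theta (room P' a))}"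

definition phi :: "agent set set \<Rightarrow> agent set set \<Rightarrow> int" where
  "phi P P' = int (card (Nset P P')) - int (card (Nset P' P))"

definition top_type :: "agent set set \<Rightarrow> bool" where
  "top_type P \<longleftrightarrow> (\<exists>x1 x2 x3 x4. distinct [x1, x2, x3, x4] \<and> {x1, x2, x3, x4} = {B1, B2, B3, B4} \<and>
       P = {{R1, x1, x2}, {R2, R3, x3}, {B5, B6, x4}})"

end

theory Submission
  imports Defs
begin

lemma UNIV_agent: "(UNIV::agent set) = {R1,R2,R3,B1,B2,B3,B4,B5,B6}"
  by (rule UNIV_eq_I, case_tac x, simp_all)

instance agent :: finite by standard (simp add: UNIV_agent)

lemma room_eq:
  assumes "outcome P" "C \<in> P" "a \<in> C" shows "room P a = C"
proof -
  have d: "disjoint P" using assms(1) unfolding outcome_def partition_on_def by (elim conjE)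
  have u: "D = C" if "D \<in> P" "a \<in> D" for D
  proof (rule ccontr)
    assume "D \<noteq> C"
    then have "D \<inter> C = {}" using disjointD[OF d that(1) assms(2)] by simp
    then show False using that(2) assms(3) by blast
  qed
  show ?thesis unfolding room_def
    by (rule the_equality) (use assms(2,3) u in blast)+
qed

lemma room_in:
  assumes "outcome P" shows "room P a \<in> P \<and> a \<in> room P a"
proof -
  have "\<Union>P = UNIV" using assms unfolding outcome_def partition_on_def by auto
  then obtain C where "C \<in> P" "a \<in> C" by blast
  then show ?thesis using room_eq[OF assms] by auto
qed

lemma room_card: assumes "outcome P" shows "card (room P a) = 3"
  using room_in[OF assms] assms unfolding outcome_def room_size_def by auto

lemma room_same: assumes "outcome P" "b \<in> room P a" shows "room P b = room P a"
  using room_eq[OF assms(1) _ assms(2)] room_in[OF assms(1)] by auto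

definition T :: "agent set set \<Rightarrow> agent \<Rightarrow> real" where
  "T P a = theta (room P a)"

lemma T_eq: assumes "outcome P"
  shows "T P a = (if a \<in> room P R1 then T P R1 else if a \<in> room P R2 then T P R2
     else if a \<in> room P R3 then T P R3 else 0)"
proof -
  have noR: "room P a \<inter> Red = {}" if "a \<notin> room P R1" "a \<notin> room P R2" "a \<notin> room P R3"
  proof (rule ccontr)
    assume "room P a \<inter> Red \<noteq> {}"
    then obtain x where x: "x \<in> room P a" "x \<in> Red" by blast
    then have "room P x = room P a" using room_same[OF assms] by auto
    then have "a \<in> room P x" using room_in[OF assms] by auto
    then show False using that x(2) unfolding Red_def by auto
  qed
  show ?thesis
  proof (cases "a \<in> room P R1")
    case True then show ?thesis unfolding T_def using room_same[OF assms True] by simp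
  next
    case n1: False show ?thesis
    proof (cases "a \<in> room P R2")
      case True then show ?thesis unfolding T_def using n1 room_same[OF assms True] by simp
    next
      case n2: False show ?thesis
      proof (cases "a \<in> room P R3")
        case True then show ?thesis unfolding T_def using n1 n2 room_same[OF assms True] by simp
      next
        case False then show ?thesis unfolding T_def theta_def using n1 n2 noR by simp
      qed
    qed
  qed
qed

lemma card3: assumes "card S = 3" "a \<in> S"
  shows "\<exists>y z. S = {a,y,z} \<and> y \<noteq> a \<and> z \<noteq> a \<and> y \<noteq> z"
proof -
  from assms(1) obtain x y z where S: "S = {x,y,z}" "x \<noteq> y" "y \<noteq> z" "x \<noteq> z"
    unfolding card_3_iff by blast
  then show ?thesis using assms(2) by (cases "a = x"; cases "a = y"; auto simp: insert_commute)
qed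

lemma card3b: assumes "card S = 3" "a \<in> S" "b \<in> S" "a \<noteq> b"
  shows "\<exists>y. S = {a,b,y} \<and> y \<noteq> a \<and> y \<noteq> b"
proof -
  from card3[OF assms(1,2)] obtain y z where "S = {a,y,z}" "y \<noteq> a" "z \<noteq> a" "y \<noteq> z" by blast
  then show ?thesis using assms(3,4) by (cases "b = y"; auto simp: insert_commute)
qed

definition sc :: "agent \<Rightarrow> real \<Rightarrow> real \<Rightarrow> int" where
  "sc a u v = (if prefers_frac a u v then 1 else 0) - (if prefers_frac a v u then 1 else 0)"

definition tt :: "agent \<times> agent \<times> agent \<times> agent \<Rightarrow> agent \<Rightarrow> real" where
  "tt s a = (case s of (x1,x2,x3,x4) \<Rightarrow>
     (if a = R1 then 1/3 else if a = R2 \<or> a = R3 then 2/3 else if a = B5 \<or> a = B6 then 0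
      else if a = x3 then 2/3 else if a = x4 then 0 else 1/3))"

definition TP :: "agent \<times> agent \<times> agent \<times> agent \<Rightarrow> agent set set" where
  "TP s = (case s of (x1,x2,x3,x4) \<Rightarrow> {{R1,x1,x2},{R2,R3,x3},{B5,B6,x4}})"

definition sig :: "(agent \<times> agent \<times> agent \<times> agent) list" where
  "sig = [(B3,B4,B1,B2), (B2,B4,B1,B3), (B2,B3,B1,B4), (B3,B4,B2,B1), (B1,B4,B2,B3), (B1,B3,B2,B4), (B2,B4,B3,B1), (B1,B4,B3,B2), (B1,B2,B3,B4), (B2,B3,B4,B1), (B1,B3,B4,B2), (B1,B2,B4,B3)]"

definition Gs :: "agent \<Rightarrow> real \<Rightarrow> int" where
  "Gs a v = sum_list (map (\<lambda>s. sc a (tt s a) v) sig)"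

lemma Gs_tab0[simp]: "Gs R1 0 = 0"
  by (simp add: Gs_def sig_def tt_def sc_def prefers_frac_def Dplus_def Dneutral_def Dminus_def)
lemma Gs_tab1[simp]: "Gs R1 (1/3) = 0"
  by (simp add: Gs_def sig_def tt_def sc_def prefers_frac_def Dplus_def Dneutral_def Dminus_def)
lemma Gs_tab2[simp]: "Gs R1 (2/3) = 12"
  by (simp add: Gs_def sig_def tt_def sc_def prefers_frac_def Dplus_def Dneutral_def Dminus_def)
lemma Gs_tab3[simp]: "Gs R1 1 = 12"
  by (simp add: Gs_def sig_def tt_def sc_def prefers_frac_def Dplus_def Dneutral_def Dminus_def)
lemma Gs_tab4[simp]: "Gs R2 0 = 0"
  by (simp add: Gs_def sig_def tt_def sc_def prefers_frac_def Dplus_def Dneutral_def Dminus_def)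
lemma Gs_tab5[simp]: "Gs R2 (1/3) = 12"
  by (simp add: Gs_def sig_def tt_def sc_def prefers_frac_def Dplus_def Dneutral_def Dminus_def)
lemma Gs_tab6[simp]: "Gs R2 (2/3) = 0"
  by (simp add: Gs_def sig_def tt_def sc_def prefers_frac_def Dplus_def Dneutral_def Dminus_def)
lemma Gs_tab7[simp]: "Gs R2 1 = 12"
  by (simp add: Gs_def sig_def tt_def sc_def prefers_frac_def Dplus_def Dneutral_def Dminus_def)
lemma Gs_tab8[simp]: "Gs R3 0 = 0"
  by (simp add: Gs_def sig_def tt_def sc_def prefers_frac_def Dplus_def Dneutral_def Dminus_def)
lemma Gs_tab9[simp]: "Gs R3 (1/3) = 12"
  by (simp add: Gs_def sig_def tt_def sc_def prefers_frac_def Dplus_def Dneutral_def Dminus_def)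
lemma Gs_tab10[simp]: "Gs R3 (2/3) = 0"
  by (simp add: Gs_def sig_def tt_def sc_def prefers_frac_def Dplus_def Dneutral_def Dminus_def)
lemma Gs_tab11[simp]: "Gs R3 1 = 12"
  by (simp add: Gs_def sig_def tt_def sc_def prefers_frac_def Dplus_def Dneutral_def Dminus_def)
lemma Gs_tab12[simp]: "Gs B1 0 = 9"
  by (simp add: Gs_def sig_def tt_def sc_def prefers_frac_def Dplus_def Dneutral_def Dminus_def)
lemma Gs_tab13[simp]: "Gs B1 (1/3) = -6"
  by (simp add: Gs_def sig_def tt_def sc_def prefers_frac_def Dplus_def Dneutral_def Dminus_def)
lemma Gs_tab14[simp]: "Gs B1 (2/3) = 3"
  by (simp add: Gs_def sig_def tt_def sc_def prefers_frac_def Dplus_def Dneutral_def Dminus_def)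
lemma Gs_tab15[simp]: "Gs B1 1 = 0"
  by (simp add: Gs_def sig_def tt_def sc_def prefers_frac_def Dplus_def Dneutral_def Dminus_def)
lemma Gs_tab16[simp]: "Gs B2 0 = 9"
  by (simp add: Gs_def sig_def tt_def sc_def prefers_frac_def Dplus_def Dneutral_def Dminus_def)
lemma Gs_tab17[simp]: "Gs B2 (1/3) = -6"
  by (simp add: Gs_def sig_def tt_def sc_def prefers_frac_def Dplus_def Dneutral_def Dminus_def)
lemma Gs_tab18[simp]: "Gs B2 (2/3) = 3"
  by (simp add: Gs_def sig_def tt_def sc_def prefers_frac_def Dplus_def Dneutral_def Dminus_def)
lemma Gs_tab19[simp]: "Gs B2 1 = 0"
  by (simp add: Gs_def sig_def tt_def sc_def prefers_frac_def Dplus_def Dneutral_def Dminus_def)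
lemma Gs_tab20[simp]: "Gs B3 0 = 9"
  by (simp add: Gs_def sig_def tt_def sc_def prefers_frac_def Dplus_def Dneutral_def Dminus_def)
lemma Gs_tab21[simp]: "Gs B3 (1/3) = -6"
  by (simp add: Gs_def sig_def tt_def sc_def prefers_frac_def Dplus_def Dneutral_def Dminus_def)
lemma Gs_tab22[simp]: "Gs B3 (2/3) = 3"
  by (simp add: Gs_def sig_def tt_def sc_def prefers_frac_def Dplus_def Dneutral_def Dminus_def)
lemma Gs_tab23[simp]: "Gs B3 1 = 0"
  by (simp add: Gs_def sig_def tt_def sc_def prefers_frac_def Dplus_def Dneutral_def Dminus_def)
lemma Gs_tab24[simp]: "Gs B4 0 = 9"
  by (simp add: Gs_def sig_def tt_def sc_def prefers_frac_def Dplus_def Dneutral_def Dminus_def)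
lemma Gs_tab25[simp]: "Gs B4 (1/3) = -6"
  by (simp add: Gs_def sig_def tt_def sc_def prefers_frac_def Dplus_def Dneutral_def Dminus_def)
lemma Gs_tab26[simp]: "Gs B4 (2/3) = 3"
  by (simp add: Gs_def sig_def tt_def sc_def prefers_frac_def Dplus_def Dneutral_def Dminus_def)
lemma Gs_tab27[simp]: "Gs B4 1 = 0"
  by (simp add: Gs_def sig_def tt_def sc_def prefers_frac_def Dplus_def Dneutral_def Dminus_def)
lemma Gs_tab28[simp]: "Gs B5 0 = 0"
  by (simp add: Gs_def sig_def tt_def sc_def prefers_frac_def Dplus_def Dneutral_def Dminus_def)
lemma Gs_tab29[simp]: "Gs B5 (1/3) = 12"
  by (simp add: Gs_def sig_def tt_def sc_def prefers_frac_def Dplus_def Dneutral_def Dminus_def)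
lemma Gs_tab30[simp]: "Gs B5 (2/3) = 12"
  by (simp add: Gs_def sig_def tt_def sc_def prefers_frac_def Dplus_def Dneutral_def Dminus_def)
lemma Gs_tab31[simp]: "Gs B5 1 = 0"
  by (simp add: Gs_def sig_def tt_def sc_def prefers_frac_def Dplus_def Dneutral_def Dminus_def)
lemma Gs_tab32[simp]: "Gs B6 0 = 0"
  by (simp add: Gs_def sig_def tt_def sc_def prefers_frac_def Dplus_def Dneutral_def Dminus_def)
lemma Gs_tab33[simp]: "Gs B6 (1/3) = 12"
  by (simp add: Gs_def sig_def tt_def sc_def prefers_frac_def Dplus_def Dneutral_def Dminus_def)
lemma Gs_tab34[simp]: "Gs B6 (2/3) = 12"
  by (simp add: Gs_def sig_def tt_def sc_def prefers_frac_def Dplus_def Dneutral_def Dminus_def)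
lemma Gs_tab35[simp]: "Gs B6 1 = 0"
  by (simp add: Gs_def sig_def tt_def sc_def prefers_frac_def Dplus_def Dneutral_def Dminus_def)

lemma TP_props:
  assumes dx: "distinct [x1,x2,x3,x4]" and sx: "{x1,x2,x3,x4} = {B1,B2,B3,B4}"
  shows "outcome (TP (x1,x2,x3,x4)) \<and> top_type (TP (x1,x2,x3,x4)) \<and>
         (\<forall>a. T (TP (x1,x2,x3,x4)) a = tt (x1,x2,x3,x4) a)"
proof -
  have xb: "x1 \<in> {B1,B2,B3,B4}" "x2 \<in> {B1,B2,B3,B4}" "x3 \<in> {B1,B2,B3,B4}" "x4 \<in> {B1,B2,B3,B4}"
    using sx by blast+
  have nr: "x \<notin> Red" if "x \<in> {B1,B2,B3,B4}" for x using that by (auto simp: Red_def)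
  let ?A = "{R1,x1,x2}" let ?B = "{R2,R3,x3}" let ?C = "{B5,B6,x4}"
  have P: "TP (x1,x2,x3,x4) = {?A,?B,?C}" by (simp add: TP_def)
  have cov: "x \<in> ?A \<union> ?B \<union> ?C" for x
  proof -
    have "x \<in> {R1,R2,R3,B5,B6} \<or> x \<in> {B1,B2,B3,B4}" by (cases x) auto
    then show ?thesis using sx by blast
  qed
  have dAB: "?A \<inter> ?B = {}" and dAC: "?A \<inter> ?C = {}" and dBC: "?B \<inter> ?C = {}"
    using xb dx by auto
  have dis: "disjoint {?A,?B,?C}"
    unfolding disjoint_def pairwise_def disjnt_def using dAB dAC dBC by blast
  have cards: "card ?A = 3" "card ?B = 3" "card ?C = 3" using xb dx by auto
  have out: "outcome (TP (x1,x2,x3,x4))"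
    unfolding P outcome_def partition_on_def room_size_def
    using cov dis cards by auto
  have top: "top_type (TP (x1,x2,x3,x4))"
    unfolding top_type_def P using dx sx by blast
  have thA: "theta ?A = 1/3"
  proof -
    have "?A \<inter> Red = {R1}" using nr xb by (auto simp: Red_def)
    then show ?thesis using cards unfolding theta_def by simp
  qed
  have thB: "theta ?B = 2/3"
  proof -
    have "?B \<inter> Red = {R2,R3}" using nr xb by (auto simp: Red_def)
    then show ?thesis using cards unfolding theta_def by simp
  qed
  have thC: "theta ?C = 0"
  proof -
    have "?C \<inter> Red = {}" using nr xb by (auto simp: Red_def)
    then show ?thesis using cards unfolding theta_def by simp
  qed
  have inP: "?A \<in> TP (x1,x2,x3,x4)" "?B \<in> TP (x1,x2,x3,x4)" "?C \<in> TP (x1,x2,x3,x4)"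
    unfolding P by auto
  have tv: "T (TP (x1,x2,x3,x4)) a = tt (x1,x2,x3,x4) a" for a
  proof -
    consider "a \<in> ?A" | "a \<in> ?B" | "a \<in> ?C" using cov by blast
    then show ?thesis
    proof cases
      case 1 then show ?thesis unfolding T_def using room_eq[OF out inP(1) 1] thA xb dx
        by (auto simp: tt_def)
    next
      case 2 then show ?thesis unfolding T_def using room_eq[OF out inP(2) 2] thB xb dx
        by (auto simp: tt_def)
    next
      case 3 then show ?thesis unfolding T_def using room_eq[OF out inP(3) 3] thC xb dx
        by (auto simp: tt_def)
    qed
  qed
  show ?thesis using out top tv by blast
qed

lemma sig_props: "s \<in> set sig \<Longrightarrow> outcome (TP s) \<and> top_type (TP s) \<and> (\<forall>a. T (TP s) a = tt s a)"
  unfolding sig_def by (auto intro!: TP_props simp del: insert_commute)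

lemma phi_sum: "phi P' P = (\<Sum>a\<in>UNIV. sc a (T P' a) (T P a))"
proof -
  have c: "int (card {a. Q a}) = (\<Sum>a\<in>(UNIV::agent set). if Q a then 1 else 0)" for Q :: "agent \<Rightarrow> bool"
  proof -
    have "(\<Sum>a\<in>(UNIV::agent set). (if Q a then 1 else 0::int)) = (\<Sum>a\<in>{a. Q a}. 1)"
      using sum.If_cases[of "UNIV::agent set" Q "\<lambda>_. (1::int)" "\<lambda>_. 0"] by simp
    then show ?thesis by simp
  qed
  show ?thesis unfolding phi_def Nset_def c sc_def T_def by (simp add: sum_subtractf)
qed


lemma cII: assumes "y \<notin> {R1,R2,R3}" "u \<notin> {R1,R2,R3,y}" "v \<notin> {R1,R2,R3,y,u}"
  shows "0 < (\<Sum>a\<in>UNIV. Gs a (if a \<in> {R1,R2,y} then 2/3 else if a \<in> {R3,u,v} then 1/3 else 0))"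
  using assms by (cases y; cases u; cases v; simp add: UNIV_agent)

lemma cIII: assumes "y \<notin> {R1,R2,R3}" "u \<notin> {R1,R2,R3,y}" "v \<notin> {R1,R2,R3,y,u}"
  shows "0 < (\<Sum>a\<in>UNIV. Gs a (if a \<in> {R1,R3,y} then 2/3 else if a \<in> {R2,u,v} then 1/3 else 0))"
  using assms by (cases y; cases u; cases v; simp add: UNIV_agent)

lemma cIV: assumes "y \<notin> {R1,R2,R3}" "u \<notin> {R1,R2,R3,y}" "v \<notin> {R1,R2,R3,y,u}"
   "B5 \<in> {u,v,y} \<or> B6 \<in> {u,v,y}"
  shows "0 < (\<Sum>a\<in>UNIV. Gs a (if a \<in> {R1,u,v} then 1/3 else if a \<in> {R2,R3,y} then 2/3 else 0))"
  using assms by (cases y; cases u; cases v; simp add: UNIV_agent)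

lemma theta3: assumes "card C = 3" "card (C \<inter> Red) = k" shows "theta C = real k / 3"
  using assms unfolding theta_def by simp


lemma key: assumes out: "outcome P" and nt: "\<not> top_type P"
  shows "0 < (\<Sum>a\<in>UNIV. Gs a (T P a))"
proof -
  let ?r = "room P"
  have mem: "a \<in> ?r a" for a using room_in[OF out] by blast
  have inP: "?r a \<in> P" for a using room_in[OF out] by blast
  have crd: "card (?r a) = 3" for a using room_card[OF out] .
  have same: "?r b = ?r a" if "b \<in> ?r a" for a b using room_same[OF out that] .
  have Teq: "T P a = (if a \<in> ?r R1 then T P R1 else if a \<in> ?r R2 then T P R2
     else if a \<in> ?r R3 then T P R3 else 0)" for a using T_eq[OF out] .
  have cardU: "card (UNIV::agent set) = 9" by (simp add: UNIV_agent)
  have disj: "?r a \<inter> ?r b = {}" if "b \<notin> ?r a" for a b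
  proof (rule ccontr)
    assume "?r a \<inter> ?r b \<noteq> {}"
    then obtain x where "x \<in> ?r a" "x \<in> ?r b" by blast
    then have "?r a = ?r b" using same by metis
    then show False using that mem by metis
  qed
  have cover: "?r a \<union> ?r b \<union> ?r c = UNIV" if "b \<notin> ?r a" "c \<notin> ?r a" "c \<notin> ?r b" for a b c
  proof -
    have d1: "?r a \<inter> ?r b = {}" using disj that by blast
    have d2: "(?r a \<union> ?r b) \<inter> ?r c = {}" using disj[of c a] disj[of c b] that by blast
    have "card (?r a \<union> ?r b \<union> ?r c) = 9"
      using d1 d2 crd by (simp add: card_Un_disjoint)
    then show ?thesis using cardU by (metis card_subset_eq finite subset_UNIV)
  qed
  have nR: "x \<in> {B1,B2,B3,B4,B5,B6}" if "x \<notin> {R1,R2,R3}" for x using that by (cases x) auto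
  consider (i) "R2 \<in> ?r R1" "R3 \<in> ?r R1" | (ii) "R2 \<in> ?r R1" "R3 \<notin> ?r R1"
    | (iii) "R2 \<notin> ?r R1" "R3 \<in> ?r R1" | (iv) "R2 \<notin> ?r R1" "R3 \<notin> ?r R1" "R3 \<in> ?r R2"
    | (v) "R2 \<notin> ?r R1" "R3 \<notin> ?r R1" "R3 \<notin> ?r R2" by blast
  then show ?thesis
  proof cases
    case i
    obtain y where y: "?r R1 = {R1,R2,y}" "y \<noteq> R1" "y \<noteq> R2"
      using card3b[OF crd mem i(1)] by auto
    have r1: "?r R1 = {R1,R2,R3}" using y i(2) by auto
    have r2: "?r R2 = ?r R1" "?r R3 = ?r R1" using same i by auto
    have t1: "T P R1 = 1" unfolding T_def r1 theta_def Red_def by simp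
    have "T P a = (if a \<in> {R1,R2,R3} then 1 else 0)" for a
      using Teq[of a] r1 r2 t1 by (simp add: T_def)
    then show ?thesis by (simp add: UNIV_agent)
  next
    case ii
    obtain y where y: "?r R1 = {R1,R2,y}" "y \<noteq> R1" "y \<noteq> R2"
      using card3b[OF crd mem ii(1)] by auto
    have yR3: "y \<noteq> R3" using y ii(2) by auto
    obtain u v where uv: "?r R3 = {R3,u,v}" "u \<noteq> R3" "v \<noteq> R3" "u \<noteq> v"
      using card3[OF crd mem] by blast
    have d: "?r R1 \<inter> ?r R3 = {}" using disj ii(2) by blast
    have r2: "?r R2 = ?r R1" using same ii by auto
    have t1: "T P R1 = 2/3"
    proof -
      have "?r R1 \<inter> Red = {R1,R2}" using y yR3 by (auto simp: Red_def)
      then show ?thesis unfolding T_def using theta3[OF crd] by simp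
    qed
    have t3: "T P R3 = 1/3"
    proof -
      have "?r R3 \<inter> Red = {R3}" using uv d y by (auto simp: Red_def)
      then show ?thesis unfolding T_def using theta3[OF crd] by simp
    qed
    have "T P a = (if a \<in> {R1,R2,y} then 2/3 else if a \<in> {R3,u,v} then 1/3 else 0)" for a
      using Teq[of a] y(1) uv(1) r2 t1 t3 by (simp add: T_def)
    moreover have "0 < (\<Sum>a\<in>UNIV. Gs a (if a \<in> {R1,R2,y} then 2/3 else if a \<in> {R3,u,v} then 1/3 else 0))"
      apply (rule cII) using y yR3 uv d by auto
    ultimately show ?thesis by simp
  next
    case iii
    obtain y where y: "?r R1 = {R1,R3,y}" "y \<noteq> R1" "y \<noteq> R3"
      using card3b[OF crd mem iii(2)] by auto
    have yR2: "y \<noteq> R2" using y iii(1) by auto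
    obtain u v where uv: "?r R2 = {R2,u,v}" "u \<noteq> R2" "v \<noteq> R2" "u \<noteq> v"
      using card3[OF crd mem] by blast
    have d: "?r R1 \<inter> ?r R2 = {}" using disj iii(1) by blast
    have r3: "?r R3 = ?r R1" using same iii by auto
    have t1: "T P R1 = 2/3"
    proof -
      have "?r R1 \<inter> Red = {R1,R3}" using y yR2 by (auto simp: Red_def)
      then show ?thesis unfolding T_def using theta3[OF crd] by simp
    qed
    have t2: "T P R2 = 1/3"
    proof -
      have "?r R2 \<inter> Red = {R2}" using uv d y by (auto simp: Red_def)
      then show ?thesis unfolding T_def using theta3[OF crd] by simp
    qed
    have "T P a = (if a \<in> {R1,R3,y} then 2/3 else if a \<in> {R2,u,v} then 1/3 else 0)" for a
      using Teq[of a] y(1) uv(1) r3 t1 t2 d by (auto simp: T_def)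
    moreover have "0 < (\<Sum>a\<in>UNIV. Gs a (if a \<in> {R1,R3,y} then 2/3 else if a \<in> {R2,u,v} then 1/3 else 0))"
      apply (rule cIII) using y yR2 uv d by auto
    ultimately show ?thesis by simp
  next
    case iv
    obtain y where y: "?r R2 = {R2,R3,y}" "y \<noteq> R2" "y \<noteq> R3"
      using card3b[OF crd mem iv(3)] by auto
    obtain u v where uv: "?r R1 = {R1,u,v}" "u \<noteq> R1" "v \<noteq> R1" "u \<noteq> v"
      using card3[OF crd mem] by blast
    have d: "?r R1 \<inter> ?r R2 = {}" using disj iv(1) by blast
    have r3: "?r R3 = ?r R2" using same iv by auto
    have t1: "T P R1 = 1/3"
    proof -
      have "?r R1 \<inter> Red = {R1}" using uv iv by (auto simp: Red_def)
      then show ?thesis unfolding T_def using theta3[OF crd] by simp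
    qed
    have t2: "T P R2 = 2/3"
    proof -
      have "?r R2 \<inter> Red = {R2,R3}" using y d uv by (auto simp: Red_def)
      then show ?thesis unfolding T_def using theta3[OF crd] by simp
    qed
    have Tf: "T P a = (if a \<in> {R1,u,v} then 1/3 else if a \<in> {R2,R3,y} then 2/3 else 0)" for a
      using Teq[of a] y(1) uv(1) r3 t1 t2 d by (auto simp: T_def)
    have base: "y \<notin> {R1,R2,R3}" "u \<notin> {R1,R2,R3,y}" "v \<notin> {R1,R2,R3,y,u}"
      using y uv d iv by auto
    show ?thesis
    proof (cases "B5 \<in> {u,v,y} \<or> B6 \<in> {u,v,y}")
      case True
      have "0 < (\<Sum>a\<in>UNIV. Gs a (if a \<in> {R1,u,v} then 1/3 else if a \<in> {R2,R3,y} then 2/3 else 0))"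
        by (rule cIV[OF base True])
      then show ?thesis using Tf by simp
    next
      case False
      have b5: "B5 \<notin> ?r R1" "B5 \<notin> ?r R2" using False y uv by auto
      have cov: "?r R1 \<union> ?r R2 \<union> ?r B5 = UNIV"
        by (rule cover) (use b5 iv(1) in auto)
      have b6: "B6 \<in> ?r B5" using cov False y uv by auto
      obtain w where w: "?r B5 = {B5,B6,w}" "w \<noteq> B5" "w \<noteq> B6"
        using card3b[OF crd mem b6] by auto
      have d15: "?r R1 \<inter> ?r B5 = {}" using disj b5 by blast
      have d25: "?r R2 \<inter> ?r B5 = {}" using disj b5 by blast
      have Peq: "P = {?r R1, ?r R2, ?r B5}"
      proof
        show "{?r R1, ?r R2, ?r B5} \<subseteq> P" using inP by auto
      next
        show "P \<subseteq> {?r R1, ?r R2, ?r B5}"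
        proof
          fix C assume C: "C \<in> P"
          have "C \<noteq> {}" using C out unfolding outcome_def partition_on_def by auto
          then obtain x where x: "x \<in> C" by blast
          have rx: "?r x = C" using room_eq[OF out C x] .
          have "x \<in> ?r R1 \<or> x \<in> ?r R2 \<or> x \<in> ?r B5" using cov by blast
          then show "C \<in> {?r R1, ?r R2, ?r B5}" using same rx by auto
        qed
      qed
      have wn: "w \<notin> {R1,R2,R3,u,v,y}" using w d15 d25 y uv by auto
      have inB: "z \<in> {B1,B2,B3,B4}" if "z \<notin> {R1,R2,R3,B5,B6}" for z using that by (cases z) auto
      have sub: "{u,v,y,w} \<subseteq> {B1,B2,B3,B4}"
        using inB[of u] inB[of v] inB[of y] inB[of w] base wn w False by auto
      have dst: "distinct [u,v,y,w]" using base wn by auto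
      have "card {u,v,y,w} = 4" using dst by simp
      moreover have "card {B1,B2,B3,B4} = 4" by simp
      ultimately have seq: "{u,v,y,w} = {B1,B2,B3,B4}" using sub by (metis card_subset_eq finite.emptyI finite.insertI)
      have tt0: "top_type {{R1,u,v},{R2,R3,y},{B5,B6,w}}" unfolding top_type_def
        apply (rule exI[of _ u], rule exI[of _ v], rule exI[of _ y], rule exI[of _ w])
        using dst seq by simp
      have "top_type P" using tt0 Peq y(1) uv(1) w(1) by simp
      then show ?thesis using nt by blast
    qed
  next
    case v
    have c: "?r R1 \<union> ?r R2 \<union> ?r R3 = UNIV" by (rule cover) (use v in auto)
    have n12: "R1 \<notin> ?r R2" using same v mem by metis
    have n13: "R1 \<notin> ?r R3" using same v mem by metis
    have n23: "R2 \<notin> ?r R3" using same v mem by metis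
    have t1: "T P R1 = 1/3"
    proof -
      have "?r R1 \<inter> Red = {R1}" using v mem by (auto simp: Red_def)
      then show ?thesis unfolding T_def using theta3[OF crd] by simp
    qed
    have t2: "T P R2 = 1/3"
    proof -
      have "?r R2 \<inter> Red = {R2}" using v mem n12 by (auto simp: Red_def)
      then show ?thesis unfolding T_def using theta3[OF crd] by simp
    qed
    have t3: "T P R3 = 1/3"
    proof -
      have "?r R3 \<inter> Red = {R3}" using mem n13 n23 by (auto simp: Red_def)
      then show ?thesis unfolding T_def using theta3[OF crd] by simp
    qed
    have h: "T P a = 1/3" for a using Teq[of a] c t1 t2 t3 by auto
    show ?thesis unfolding h by (simp add: UNIV_agent)
  qed
qed


lemma sum_list_swap:
  "sum_list (map (\<lambda>s. \<Sum>a\<in>A. f s a) xs) = (\<Sum>a\<in>A. sum_list (map (\<lambda>s. f s a) xs))"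
  by (induct xs) (simp_all add: sum.distrib)

lemma total: "sum_list (map (\<lambda>s. phi (TP s) P) sig) = (\<Sum>a\<in>UNIV. Gs a (T P a))"
proof -
  have e: "map (\<lambda>s. phi (TP s) P) sig = map (\<lambda>s. \<Sum>a\<in>UNIV. sc a (tt s a) (T P a)) sig"
    by (rule map_cong[OF refl]) (use sig_props in \<open>simp add: phi_sum\<close>)
  show ?thesis unfolding e sum_list_swap Gs_def ..
qed

theorem mainTheorem8:
  assumes "outcome P" and "\<not> top_type P"
  shows "\<exists>P'. outcome P' \<and> top_type P' \<and> phi P' P > 0"
proof (rule ccontr)
  assume na: "\<not> ?thesis"
  have "sum_list (map (\<lambda>s. phi (TP s) P) sig) \<le> 0"
    by (rule sum_list_nonpos) (use na sig_props in fastforce)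
  moreover have "0 < (\<Sum>a\<in>UNIV. Gs a (T P a))" using key[OF assms] .
  ultimately show False using total by simp
qed

end
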